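(* Let $b>0$ and $c>0$ be constants, let $J\subset\mathbb{R}$ be an open interval, and let $a\in L^\infty(J)$ satisfy $0\le a(t)\le C$ for almost every $t\in J$, where $C\ge 0$ is a constant such that $$C< c\,\max\{c,\,2\sqrt b\}.$$ Then there exist constants $\delta>0$ and $M>0$ such that every solution $u\in W^{2,\infty}_{\mathrm{loc}}(J)$ of $$u''(t)+c\,u'(t)+\big(b+a(t)\big)u(t)=0\quad\text{for a.e. } t\in J$$ satisfies $$u(t)^2+u'(t)^2\le M\,\big[u(s)^2+u'(s)^2\big]\,e^{-\delta (t-s)}$$ for all $s,t\in J$ with $s\le t$. *)

theory Defs
  imports "HOL-Analysis.Analysis"
begin

text \<open>A function u lies in W^{2,inf}_loc(J) (J open) iff u is C^1 on J with locally
Lipschitz derivative u'; then u'' exists a.e. (Rademacher) and coincides with the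
weak second derivative.\<close>

definition W2inf_loc_solution ::
  "real set \<Rightarrow> real \<Rightarrow> real \<Rightarrow> (real \<Rightarrow> real) \<Rightarrow> (real \<Rightarrow> real) \<Rightarrow> (real \<Rightarrow> real) \<Rightarrow> bool" where
  "W2inf_loc_solution J b c a u u' \<longleftrightarrow>
     (\<forall>t\<in>J. (u has_real_derivative u' t) (at t)) \<and>
     (\<forall>K. compact K \<and> K \<subseteq> J \<longrightarrow> (\<exists>L. L-lipschitz_on K u')) \<and>
     (AE t in lebesgue. t \<in> J \<longrightarrow>
        (\<exists>v. (u' has_real_derivative v) (at t) \<and> v + c * u' t + (b + a t) * u t = 0))"

end

theory Submission
  imports Defs
begin

lemma psd:
  fixes A B D x y :: real
  assumes "A \<ge> 0" "D \<ge> 0" "B^2 \<le> A*D"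
  shows "A*y^2 + 2*B*x*y + D*x^2 \<ge> 0"
proof (cases "A = 0")
  case True
  then have "B = 0" using assms by simp
  then show ?thesis using True assms by simp
next
  case False
  then have Ap: "A > 0" using assms by simp
  have "A*(A*y^2 + 2*B*x*y + D*x^2) = (A*y+B*x)^2 + (A*D - B^2)*x^2"
    by (simp add: power2_eq_square algebra_simps)
  also have "\<dots> \<ge> 0" using assms by simp
  finally show ?thesis using Ap by (simp add: zero_le_mult_iff)
qed

lemma key_ineq:
  fixes b c C :: real
  assumes "b > 0" "c > 0" "C \<ge> 0" "C < c * max c (2 * sqrt b)"
  shows "C < c * sqrt b + c * sqrt (b + C)"
proof (cases "c \<ge> 2 * sqrt b")
  case True
  then have C: "C < c^2" using assms by (simp add: power2_eq_square)
  show ?thesis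
  proof (cases "C = 0")
    case True then show ?thesis using assms by simp
  next
    case False
    have "sqrt C < c" using C assms
      by (metis abs_of_pos real_sqrt_abs real_sqrt_less_iff)
    moreover have "sqrt C > 0" using False assms by simp
    ultimately have "sqrt C * sqrt C < c * sqrt C" by (rule mult_strict_right_mono)
    moreover have "sqrt C * sqrt C = C" using assms by simp
    ultimately have "C < c * sqrt C" by simp
    also have "\<dots> \<le> c * sqrt (b+C)" using assms by simp
    moreover have "c * sqrt b > 0" using assms by simp
    ultimately show ?thesis by linarith
  qed
next
  case False
  then have "C < 2 * c * sqrt b" using assms by simp
  moreover have "sqrt b \<le> sqrt (b + C)" using assms by simp
  then have "c * sqrt b \<le> c * sqrt (b + C)" using assms by (simp add: mult_left_mono)
  ultimately show ?thesis by linarith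
qed

lemma alg_constants:
  fixes b c C :: real
  assumes "b > 0" "c > 0" "C \<ge> 0" "C < c * max c (2 * sqrt b)"
  shows "\<exists>a0 \<epsilon>. \<epsilon> > 0 \<and> a0 \<ge> 0 \<and> (\<forall>a x y. 0 \<le> a \<longrightarrow> a \<le> C \<longrightarrow>
     c*y^2 + 2*(a-a0)*x*y + c*(b+a)*x^2 \<ge> \<epsilon>*(x^2+y^2))"
proof -
  define r1 where "r1 = sqrt b"
  define r2 where "r2 = sqrt (b + C)"
  have key: "C < c*r1 + c*r2" using key_ineq[OF assms] by (simp add: r1_def r2_def)
  have r1: "r1 > 0" "r1^2 = b" using assms by (auto simp: r1_def)
  have r2: "r2 > 0" "r2^2 = b + C" using assms by (auto simp: r2_def)
  have r12: "r1 \<le> r2" using assms by (simp add: r1_def r2_def)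
  define a0 where "a0 = max 0 ((C - c*r2 + c*r1)/2)"
  have cr1: "c*r1 > 0" using assms r1 by simp
  have a0a: "-c*r1 < a0" "a0 < c*r1" using key cr1 by (auto simp: a0_def)
  have cr12: "c*r1 \<le> c*r2" using r12 assms by simp
  have a0b: "C - c*r2 < a0 \<and> a0 < C + c*r2"
  proof (cases "0 \<le> (C - c*r2 + c*r1)/2")
    case True
    then have "2*a0 = C - c*r2 + c*r1" by (simp add: a0_def)
    then show ?thesis using key cr1 cr12 assms(3) by (intro conjI; linarith)
  next
    case False
    then have "a0 = 0" "C - c*r2 + c*r1 < 0" by (auto simp add: a0_def)
    then show ?thesis using key cr1 cr12 assms(3) by (intro conjI; linarith)
  qed
  have "\<bar>a0\<bar> < c*r1" using a0a by (simp add: abs_less_iff)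
  then have "\<bar>a0\<bar>^2 < (c*r1)^2" by (rule power_strict_mono) auto
  then have "a0^2 < (c*r1)^2" by simp
  then have m0: "c^2*b - a0^2 > 0" using r1 by (simp add: power_mult_distrib)
  have "\<bar>C - a0\<bar> < c*r2" using a0b by (simp add: abs_less_iff)
  then have "\<bar>C - a0\<bar>^2 < (c*r2)^2" by (rule power_strict_mono) auto
  then have "(C - a0)^2 < (c*r2)^2" by simp
  then have m1: "c^2*(b+C) - (C-a0)^2 > 0" using r2 by (simp add: power_mult_distrib)
  define m where "m = min (c^2*b - a0^2) (c^2*(b+C) - (C-a0)^2)"
  have mpos: "m > 0" using m0 m1 by (simp add: m_def)
  have fa: "c^2*(b+a) - (a-a0)^2 \<ge> m" if "0 \<le> a" "a \<le> C" for a
  proof (cases "c^2 - a + 2*a0 \<ge> 0")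
    case True
    have "c^2*(b+a) - (a-a0)^2 - (c^2*b - a0^2) = a*(c^2 - a + 2*a0)"
      by (simp add: power2_eq_square algebra_simps)
    also have "\<dots> \<ge> 0" using True that by simp
    finally show ?thesis unfolding m_def by linarith
  next
    case False
    have "c^2*(b+a) - (a-a0)^2 - (c^2*(b+C) - (C-a0)^2) = (C - a)*(C + a - 2*a0 - c^2)"
      by (simp add: power2_eq_square algebra_simps)
    also have "\<dots> \<ge> 0" using False that by simp
    finally show ?thesis unfolding m_def by linarith
  qed
  define \<epsilon> where "\<epsilon> = min (m / (c*(1+b+C))) (min c (c*b))"
  have epos: "\<epsilon> > 0" using mpos assms by (simp add: \<epsilon>_def)
  have e1: "\<epsilon> * (c*(1+b+C)) \<le> m" using assms
    by (simp add: \<epsilon>_def pos_le_divide_eq[symmetric] add_pos_nonneg)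
  have e2: "\<epsilon> \<le> c" "\<epsilon> \<le> c*b" by (auto simp: \<epsilon>_def)
  have "c*y^2 + 2*(a-a0)*x*y + c*(b+a)*x^2 \<ge> \<epsilon>*(x^2+y^2)" if "0 \<le> a" "a \<le> C" for a x y
  proof -
    have A: "c - \<epsilon> \<ge> 0" using e2 by simp
    have cb: "c*b \<le> c*(b+a)" using that assms by simp
    have D: "c*(b+a) - \<epsilon> \<ge> 0" using e2 cb by simp
    have "\<epsilon>*(c*(1+b+a)) \<le> \<epsilon> * (c*(1+b+C))" using that assms epos by simp
    then have "(a-a0)^2 \<le> c^2*(b+a) - \<epsilon>*(c*(1+b+a))" using fa[OF that] e1 by linarith
    also have "\<dots> \<le> (c-\<epsilon>)*(c*(b+a) - \<epsilon>)"
      by (simp add: power2_eq_square algebra_simps)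
    finally have B: "(a-a0)^2 \<le> (c-\<epsilon>)*(c*(b+a) - \<epsilon>)" .
    have "(c-\<epsilon>)*y^2 + 2*(a-a0)*x*y + (c*(b+a)-\<epsilon>)*x^2 \<ge> 0"
      by (rule psd[OF A D B])
    then show ?thesis by (simp add: algebra_simps)
  qed
  then show ?thesis using epos by (intro exI[of _ a0] exI[of _ \<epsilon>]) (auto simp: a0_def)
qed

lemma mono_strict_aux:
  fixes f :: "real \<Rightarrow> real"
  assumes st: "s \<le> t" and lip: "L-lipschitz_on {s..t} f" and negN: "negligible N"
    and der: "\<And>x. x \<in> {s<..<t} \<Longrightarrow> x \<notin> N \<Longrightarrow> \<exists>D. (f has_real_derivative D) (at x) \<and> D < 0"
  shows "f t \<le> f s"
proof (rule ccontr)
  assume "\<not> f t \<le> f s"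
  then have lt: "f s < f t" by simp
  have cont: "continuous_on {s..t} f" using lip by (rule lipschitz_on_continuous_on)
  define S where "S = ({s,t} \<union> N) \<inter> {s..t}"
  have negS: "negligible S" unfolding S_def
    by (rule negligible_subset[of "{s,t} \<union> N"]) (auto intro: negN)
  have "negligible (f ` S)"
  proof (rule negligible_locally_Lipschitz_image)
    show "DIM(real) \<le> DIM(real)" by simp
    show "negligible S" by (rule negS)
    fix x assume "x \<in> S"
    show "\<exists>T B. open T \<and> x \<in> T \<and> (\<forall>y\<in>S \<inter> T. norm (f y - f x) \<le> B * norm (y - x))"
    proof (rule exI[of _ UNIV], rule exI[of _ L], intro conjI ballI)
      fix y assume "y \<in> S \<inter> UNIV"
      then have "y \<in> {s..t}" "x \<in> {s..t}" using \<open>x \<in> S\<close> by (auto simp: S_def)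
      from lipschitz_onD[OF lip this] show "norm (f y - f x) \<le> L * norm (y - x)"
        by (simp add: dist_norm)
    qed auto
  qed
  moreover have "{f s<..<f t} \<subseteq> f ` S"
  proof
    fix y assume y: "y \<in> {f s<..<f t}"
    define A where "A = {x \<in> {s..t}. f x \<le> y}"
    have clA: "closed A" unfolding A_def
      by (rule continuous_on_closed_Collect_le[OF cont continuous_on_const]) simp
    have sA: "s \<in> A" using y st by (simp add: A_def)
    have bdd: "bdd_above A" by (rule bdd_aboveI[of _ t]) (auto simp: A_def)
    define z where "z = Sup A"
    have zA: "z \<in> A" unfolding z_def using closed_contains_Sup[OF _ bdd clA] sA by auto
    have zle: "x \<le> z" if "x \<in> A" for x unfolding z_def by (rule cSup_upper[OF that bdd])
    have z1: "s \<le> z" "z \<le> t" "f z \<le> y" using zA by (auto simp: A_def)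
    have "continuous_on {z..t} f" by (rule continuous_on_subset[OF cont]) (use z1 in auto)
    then obtain x' where x': "z \<le> x'" "x' \<le> t" "f x' = y"
      using IVT'[of f z y t] z1 y by auto
    then have "x' \<in> A" using z1 by (auto simp: A_def)
    then have "x' = z" using zle x' by force
    then have fz: "f z = y" using x' by simp
    have zs: "z \<noteq> s" using fz y by auto
    have zt: "z \<noteq> t" using fz y by auto
    have "z \<in> S"
    proof (rule ccontr)
      assume "z \<notin> S"
      then have "z \<notin> N" using z1 by (auto simp: S_def)
      moreover have "z \<in> {s<..<t}" using z1 zs zt by auto
      ultimately obtain D where D: "(f has_real_derivative D) (at z)" "D < 0" using der by blast
      obtain d where d: "d > 0" "\<And>h. h > 0 \<Longrightarrow> h < d \<Longrightarrow> f z > f (z + h)"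
        using DERIV_neg_dec_right[OF D] by blast
      define h where "h = min d (t - z) / 2"
      have "2*h = min d (t - z)" by (simp add: h_def)
      then have h2: "2*h \<le> t - z" "2*h \<le> d" "2*h > 0" using d zt z1 by auto
      have h: "h > 0" "h < d" "z + h \<le> t" using d h2 by linarith+
      then have "f (z + h) < y" using d fz by auto
      then have "z + h \<in> A" using h z1 by (auto simp: A_def)
      then have "z + h \<le> z" by (rule zle)
      then show False using h by simp
    qed
    then show "y \<in> f ` S" using fz by blast
  qed
  ultimately have "negligible {f s<..<f t}" by (rule negligible_subset)
  then have "box (f s) (f t) = {}" by (simp add: negligible_interval flip: box_real)
  then show False using lt by (simp add: box_real)
qed

lemma mono_aux:
  fixes f :: "real \<Rightarrow> real"
  assumes st: "s \<le> t" and lip: "L-lipschitz_on {s..t} f" and negN: "negligible N"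
    and der: "\<And>x. x \<in> {s<..<t} \<Longrightarrow> x \<notin> N \<Longrightarrow> \<exists>D. (f has_real_derivative D) (at x) \<and> D \<le> 0"
  shows "f t \<le> f s"
proof (rule ccontr)
  assume "\<not> f t \<le> f s"
  then have lt: "f s < f t" by simp
  then have st': "s < t" using st by (cases "s = t") auto
  define e where "e = (f t - f s) / (2*(t - s))"
  have e: "e > 0" using lt st' by (simp add: e_def)
  have "(\<lambda>x. f x - e * x) t \<le> (\<lambda>x. f x - e * x) s"
  proof (rule mono_strict_aux[OF st _ negN])
    show "(L + \<bar>e\<bar>*1)-lipschitz_on {s..t} (\<lambda>x. f x - e * x)"
      using lipschitz_on_diff[OF lip lipschitz_on_cmult_real[OF lipschitz_on_id[of "{s..t}"], where a=e]] by simp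
    fix x assume "x \<in> {s<..<t}" "x \<notin> N"
    then obtain D where D: "(f has_real_derivative D) (at x)" "D \<le> 0" using der by blast
    have "((\<lambda>x. f x - e * x) has_real_derivative (D - e*1)) (at x)"
      using DERIV_diff[OF D(1) DERIV_cmult[OF DERIV_ident, of e]] by simp
    then show "\<exists>D. ((\<lambda>x. f x - e * x) has_real_derivative D) (at x) \<and> D < 0"
      using D e by (intro exI[of _ "D - e*1"]) auto
  qed
  then have "f t - f s \<le> e * (t - s)" by (simp add: algebra_simps)
  also have "\<dots> = (f t - f s)/2" using st' by (simp add: e_def field_simps)
  finally show False using lt by simp
qed

lemma lip_mult:
  fixes f g :: "real \<Rightarrow> real"
  assumes K: "compact K" and f: "L1-lipschitz_on K f" and g: "L2-lipschitz_on K g"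
  shows "\<exists>L. L-lipschitz_on K (\<lambda>x. f x * g x)"
proof -
  have "bounded (f ` K)" using K lipschitz_on_continuous_on[OF f]
    by (intro compact_imp_bounded compact_continuous_image)
  then obtain B1 where B1: "B1 > 0" "\<And>x. x \<in> K \<Longrightarrow> \<bar>f x\<bar> \<le> B1"
    by (auto simp: bounded_pos)
  have "bounded (g ` K)" using K lipschitz_on_continuous_on[OF g]
    by (intro compact_imp_bounded compact_continuous_image)
  then obtain B2 where B2: "B2 > 0" "\<And>x. x \<in> K \<Longrightarrow> \<bar>g x\<bar> \<le> B2"
    by (auto simp: bounded_pos)
  have L: "L1 \<ge> 0" "L2 \<ge> 0" using f g by (auto intro: lipschitz_on_nonneg)
  show ?thesis
  proof (intro exI[of _ "B1 * L2 + B2 * L1"] lipschitz_onI)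
    show "0 \<le> B1 * L2 + B2 * L1" using B1 B2 L by simp
    fix x y assume xy: "x \<in> K" "y \<in> K"
    have "f x * g x - f y * g y = f x * (g x - g y) + g y * (f x - f y)" by (simp add: algebra_simps)
    then have "\<bar>f x * g x - f y * g y\<bar> \<le> \<bar>f x\<bar> * \<bar>g x - g y\<bar> + \<bar>g y\<bar> * \<bar>f x - f y\<bar>"
      by (metis abs_mult abs_triangle_ineq)
    also have "\<dots> \<le> B1 * (L2 * \<bar>x - y\<bar>) + B2 * (L1 * \<bar>x - y\<bar>)"
      using lipschitz_onD[OF f xy] lipschitz_onD[OF g xy] B1 B2 xy
      by (intro add_mono mult_mono) (auto simp: dist_real_def)
    finally show "dist (f x * g x) (f y * g y) \<le> (B1 * L2 + B2 * L1) * dist x y"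
      by (simp add: dist_real_def algebra_simps)
  qed
qed

lemma lip_deriv:
  fixes f f' :: "real \<Rightarrow> real"
  assumes "\<And>x. x \<in> {s..t} \<Longrightarrow> (f has_real_derivative f' x) (at x)"
    and "continuous_on {s..t} f'"
  shows "\<exists>L. L-lipschitz_on {s..t} f"
proof -
  have "bounded (f' ` {s..t})" using assms(2)
    by (intro compact_imp_bounded compact_continuous_image) auto
  then obtain B where B: "B > 0" "\<And>x. x \<in> {s..t} \<Longrightarrow> \<bar>f' x\<bar> \<le> B"
    by (auto simp: bounded_pos)
  show ?thesis
  proof (intro exI lipschitz_onI)
    show "0 \<le> B" using B by simp
    fix x y assume xy: "x \<in> {s..t}" "y \<in> {s..t}"
    have *: "\<bar>f b - f a\<bar> \<le> B * \<bar>b - a\<bar>" if ab: "a \<in> {s..t}" "b \<in> {s..t}" "a < b" for a b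
    proof -
      have "\<forall>x. a \<le> x \<and> x \<le> b \<longrightarrow> (f has_real_derivative f' x) (at x)"
        using ab by (auto intro!: assms(1))
      then obtain z where z: "a < z" "z < b" "f b - f a = (b - a) * f' z"
        using MVT2[OF \<open>a < b\<close>] by blast
      have "z \<in> {s..t}" using z ab by auto
      then have "\<bar>f' z\<bar> \<le> B" by (rule B)
      then show ?thesis using z ab by (simp add: abs_mult mult_right_mono mult.commute)
    qed
    show "dist (f x) (f y) \<le> B * dist x y"
    proof (cases x y rule: linorder_cases)
      case less then show ?thesis using *[OF xy(1,2)] by (simp add: dist_real_def abs_minus_commute)
    next
      case equal then show ?thesis using B by simp
    next
      case greater then show ?thesis using *[OF xy(2,1)] by (simp add: dist_real_def)
    qed
  qed
qed

theorem theorem2p1: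
  fixes J :: "real set" and a :: "real \<Rightarrow> real" and b c C :: real
  assumes "b > 0" and "c > 0"
    and "open J" and "is_interval J" and "J \<noteq> {}"
    and "a \<in> borel_measurable (restrict_space lebesgue J)"
    and "AE t in lebesgue. t \<in> J \<longrightarrow> 0 \<le> a t \<and> a t \<le> C"
    and "C \<ge> 0" and "C < c * max c (2 * sqrt b)"
  shows "\<exists>\<delta>>0. \<exists>M>0. \<forall>u u'. W2inf_loc_solution J b c a u u' \<longrightarrow>
           (\<forall>s\<in>J. \<forall>t\<in>J. s \<le> t \<longrightarrow>
              (u t)\<^sup>2 + (u' t)\<^sup>2 \<le> M * ((u s)\<^sup>2 + (u' s)\<^sup>2) * exp (- \<delta> * (t - s)))"
proof -
  obtain a0 \<epsilon> where e: "\<epsilon> > 0" "a0 \<ge> 0"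
    and Q: "\<And>a x y. 0 \<le> a \<Longrightarrow> a \<le> C \<Longrightarrow> c*y^2 + 2*(a-a0)*x*y + c*(b+a)*x^2 \<ge> \<epsilon>*(x^2+y^2)"
    using alg_constants[OF assms(1,2,8,9)] by blast
  define q where "q = b + a0 + c^2/2"
  define Lam where "Lam = 1 + c/2 + q"
  define lam where "lam = (q - c^2/4)/(1+q)"
  have "q - c^2/4 = (b + a0) + c^2/4" by (simp add: q_def)
  moreover have "(b + a0) + c^2/4 > 0" using assms(1) e(2) by (intro add_pos_nonneg) auto
  ultimately have q4: "q - c^2/4 > 0" by simp
  have qpos: "q > 0" using assms(1) e(2) by (simp add: q_def add_pos_nonneg)
  have Lpos: "Lam > 0" using qpos assms(2) by (simp add: Lam_def)
  have lpos: "lam > 0" using q4 qpos by (simp add: lam_def)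
  have Vup: "y^2 + c*x*y + q*x^2 \<le> Lam*(x^2+y^2)" for x y
  proof -
    have "(c+2*q)*y^2 + 2*(-c)*x*y + (2+c)*x^2 \<ge> 0"
    proof (rule psd)
      show "0 \<le> c+2*q" "0 \<le> 2+c" using qpos assms(2) by auto
      have "(c+2*q)*(2+c) = c^2 + (2*c + 4*q + 2*q*c)" by (simp add: power2_eq_square algebra_simps)
      moreover have "2*q*c \<ge> 0" using qpos assms(2) by simp
      ultimately show "(-c)^2 \<le> (c+2*q)*(2+c)" using qpos assms(2) by simp
    qed
    then have "0 \<le> 2*(Lam*(x^2+y^2) - (y^2 + c*x*y + q*x^2))" by (simp add: Lam_def algebra_simps)
    then show ?thesis by simp
  qed
  have Vlo: "lam*(x^2+y^2) \<le> y^2 + c*x*y + q*x^2" for x y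
  proof -
    have l1: "lam*(1+q)*4 = 4*q - c^2" using qpos by (simp add: lam_def field_simps)
    have "(2-2*lam)*y^2 + 2*c*x*y + (2*q-2*lam)*x^2 \<ge> 0"
    proof (rule psd)
      have l2: "lam*((1+q)*4) = 4*q - c^2" using l1 by (simp add: mult.assoc)
      have c2: "c^2 \<ge> 0" by simp
      have "lam*((1+q)*4) \<le> 1*((1+q)*4)" unfolding l2 using c2 by (simp add: algebra_simps)
      then have "lam \<le> 1" using qpos by (subst (asm) mult_le_cancel_right_pos) auto
      then show "0 \<le> 2 - 2*lam" by simp
      have "q*((1+q)*4) = 4*q + 4*q*q" by (simp add: algebra_simps)
      moreover have "q*q \<ge> 0" by simp
      ultimately have "lam*((1+q)*4) \<le> q*((1+q)*4)" unfolding l2 using c2 by (simp add: algebra_simps)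
      then have "lam \<le> q" using qpos by (subst (asm) mult_le_cancel_right_pos) auto
      then show "0 \<le> 2*q - 2*lam" by simp
      have "(2-2*lam)*(2*q-2*lam) = 4*q - lam*(1+q)*4 + 4*lam^2" by (simp add: power2_eq_square algebra_simps)
      also have "\<dots> = c^2 + 4*lam^2" using l1 by simp
      finally show "c^2 \<le> (2-2*lam)*(2*q-2*lam)" by simp
    qed
    then have "0 \<le> 2*((y^2 + c*x*y + q*x^2) - lam*(x^2+y^2))" by (simp add: algebra_simps)
    then show ?thesis by simp
  qed
  define \<delta> where "\<delta> = \<epsilon> / Lam"
  have dpos: "\<delta> > 0" using e Lpos by (simp add: \<delta>_def)
  have key: "-(c*y^2 + 2*(a-a0)*x*y + c*(b+a)*x^2) + \<delta>*(y^2 + c*x*y + q*x^2) \<le> 0"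
    if "0 \<le> a" "a \<le> C" for a x y
  proof -
    have "\<delta>*(y^2 + c*x*y + q*x^2) \<le> \<delta>*(Lam*(x^2+y^2))"
      using Vup dpos by (simp add: mult_left_mono)
    also have "\<dots> = \<epsilon>*(x^2+y^2)" using Lpos by (simp add: \<delta>_def)
    finally show ?thesis using Q[OF that, of x y] by linarith
  qed
  show ?thesis
  proof (rule exI[of _ \<delta>], intro conjI dpos, rule exI[of _ "Lam/lam"], intro conjI)
    show "Lam/lam > 0" using Lpos lpos by simp
  next
    show "\<forall>u u'. W2inf_loc_solution J b c a u u' \<longrightarrow>
           (\<forall>s\<in>J. \<forall>t\<in>J. s \<le> t \<longrightarrow>
              (u t)\<^sup>2 + (u' t)\<^sup>2 \<le> Lam/lam * ((u s)\<^sup>2 + (u' s)\<^sup>2) * exp (- \<delta> * (t - s)))"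
    proof (intro allI impI ballI)
    fix u u' s t
    assume sol: "W2inf_loc_solution J b c a u u'" and sJ: "s \<in> J" and tJ: "t \<in> J" and st: "s \<le> t"
    have sub: "{s..t} \<subseteq> J" using mem_is_interval_1_I[OF assms(4) sJ tJ] by auto
    have du: "\<And>x. x \<in> J \<Longrightarrow> (u has_real_derivative u' x) (at x)"
      and lipJ: "\<And>K. compact K \<Longrightarrow> K \<subseteq> J \<Longrightarrow> \<exists>L. L-lipschitz_on K u'"
      and ae: "AE x in lebesgue. x \<in> J \<longrightarrow>
        (\<exists>v. (u' has_real_derivative v) (at x) \<and> v + c * u' x + (b + a x) * u x = 0)"
      using sol unfolding W2inf_loc_solution_def by (meson, meson, meson)
    have "AE x in lebesgue. x \<in> J \<longrightarrow>
        (\<exists>v. (u' has_real_derivative v) (at x) \<and> v + c * u' x + (b + a x) * u x = 0) \<and> 0 \<le> a x \<and> a x \<le> C"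
      by (rule eventually_mono[OF eventually_conj[OF ae assms(7)]]) blast
    then obtain N where N: "{x \<in> space lebesgue. \<not> (x \<in> J \<longrightarrow>
        (\<exists>v. (u' has_real_derivative v) (at x) \<and> v + c * u' x + (b + a x) * u x = 0) \<and> 0 \<le> a x \<and> a x \<le> C)} \<subseteq> N"
      "emeasure lebesgue N = 0" "N \<in> sets lebesgue"
      by (rule AE_E)
    have negN: "negligible N" using N(2,3) by (simp add: negligible_iff_null_sets null_setsI)
    obtain Lp where Lp: "Lp-lipschitz_on {s..t} u'" using lipJ[OF compact_Icc sub] by blast
    have cu': "continuous_on {s..t} u'" using Lp by (rule lipschitz_on_continuous_on)
    have dus: "\<And>x. x \<in> {s..t} \<Longrightarrow> (u has_real_derivative u' x) (at x)"
      using du sub by blast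
    obtain Lu where Lu: "Lu-lipschitz_on {s..t} u"
      using lip_deriv[OF dus cu'] by blast
    obtain Le where Le: "Le-lipschitz_on {s..t} (\<lambda>x. exp (\<delta>*x))"
    proof -
      have "\<exists>L. L-lipschitz_on {s..t} (\<lambda>x. exp (\<delta>*x))"
      proof (rule lip_deriv[where f'="\<lambda>x. exp (\<delta>*x) * \<delta>"])
        show "((\<lambda>x. exp (\<delta>*x)) has_real_derivative exp (\<delta>*x) * \<delta>) (at x)" for x
          by (auto intro!: derivative_eq_intros)
        show "continuous_on {s..t} (\<lambda>x. exp (\<delta>*x) * \<delta>)" by (intro continuous_intros)
      qed
      then show ?thesis using that by blast
    qed
    obtain L1 where L1: "L1-lipschitz_on {s..t} (\<lambda>x. u' x * u' x)" using lip_mult[OF compact_Icc Lp Lp] by blast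
    obtain L2 where L2: "L2-lipschitz_on {s..t} (\<lambda>x. u x * u' x)" using lip_mult[OF compact_Icc Lu Lp] by blast
    obtain L3 where L3: "L3-lipschitz_on {s..t} (\<lambda>x. u x * u x)" using lip_mult[OF compact_Icc Lu Lu] by blast
    have LV: "(L1 + \<bar>c\<bar>*L2 + \<bar>q\<bar>*L3)-lipschitz_on {s..t} (\<lambda>x. u' x * u' x + c * (u x * u' x) + q * (u x * u x))"
      by (intro lipschitz_on_add lipschitz_on_cmult_real L1 L2 L3)
    obtain LW where LW: "LW-lipschitz_on {s..t} (\<lambda>x. (u' x * u' x + c * (u x * u' x) + q * (u x * u x)) * exp (\<delta>*x))"
      using lip_mult[OF compact_Icc LV Le] by blast
    define VV where "VV = (\<lambda>x. (u' x)^2 + c * u x * u' x + q * (u x)^2)"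
    have LW': "LW-lipschitz_on {s..t} (\<lambda>x. VV x * exp (\<delta>*x))"
      using LW by (simp add: VV_def power2_eq_square algebra_simps)
    have mono: "VV t * exp (\<delta> * t) \<le> VV s * exp (\<delta> * s)"
    proof (rule mono_aux[OF st LW' negN])
      fix x assume x: "x \<in> {s<..<t}" "x \<notin> N"
      then have xJ: "x \<in> J" using sub by auto
      with x N(1) obtain v where v: "(u' has_real_derivative v) (at x)" "v + c * u' x + (b + a x) * u x = 0"
        and ax: "0 \<le> a x" "a x \<le> C"
      proof -
        have "x \<in> J \<longrightarrow> (\<exists>v. (u' has_real_derivative v) (at x) \<and> v + c * u' x + (b + a x) * u x = 0) \<and> 0 \<le> a x \<and> a x \<le> C"
        proof -
          have "x \<notin> {x \<in> space lebesgue. \<not> (x \<in> J \<longrightarrow>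
            (\<exists>v. (u' has_real_derivative v) (at x) \<and> v + c * u' x + (b + a x) * u x = 0) \<and> 0 \<le> a x \<and> a x \<le> C)}"
            using N(1) x(2) by blast
          then show ?thesis by simp
        qed
        with xJ that show ?thesis by blast
      qed
      have "((\<lambda>x. VV x * exp (\<delta>*x)) has_real_derivative
         ((2*u' x * v + c*(u' x*u' x + u x * v) + q*(2*u x*u' x)) * exp (\<delta>*x) + VV x * (exp (\<delta>*x) * \<delta>))) (at x)"
        unfolding VV_def
        apply (rule derivative_eq_intros v(1) du[OF xJ] refl)+
        apply (simp add: power2_eq_square)
        apply (simp add: algebra_simps)
        done
      moreover have "(2*u' x * v + c*(u' x*u' x + u x * v) + q*(2*u x*u' x)) * exp (\<delta>*x) + VV x * (exp (\<delta>*x) * \<delta>) \<le> 0"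
      proof -
        have vv: "v = - c * u' x - (b + a x) * u x" using v(2) by linarith
        have "2*u' x * v + c*(u' x*u' x + u x * v) + q*(2*u x*u' x) + \<delta> * VV x
           = -(c*(u' x)^2 + 2*(a x-a0)*u x*u' x + c*(b+a x)*(u x)^2) + \<delta>*((u' x)^2 + c*u x*u' x + q*(u x)^2)"
          unfolding vv VV_def q_def by (simp add: power2_eq_square algebra_simps)
        also have "\<dots> \<le> 0" by (rule key[OF ax])
        finally have "(2*u' x * v + c*(u' x*u' x + u x * v) + q*(2*u x*u' x) + \<delta> * VV x) * exp (\<delta>*x) \<le> 0"
          by (simp add: mult_nonpos_nonneg)
        then show ?thesis by (simp add: algebra_simps)
      qed
      ultimately show "\<exists>D. ((\<lambda>x. VV x * exp (\<delta>*x)) has_real_derivative D) (at x) \<and> D \<le> 0" by blast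
    qed
    have "VV t \<le> VV s * exp (\<delta> * s) / exp (\<delta> * t)" using mono by (simp add: pos_le_divide_eq)
    also have "VV s * exp (\<delta> * s) / exp (\<delta> * t) = VV s * exp (- \<delta> * (t - s))"
    proof -
      have "- \<delta> * (t - s) = \<delta> * s - \<delta> * t" by (simp add: algebra_simps)
      then show ?thesis by (simp add: exp_diff)
    qed
    finally have Vts: "VV t \<le> VV s * exp (- \<delta> * (t - s))" .
    have "lam * ((u t)^2 + (u' t)^2) \<le> VV t" using Vlo[where x="u t" and y="u' t"] by (simp add: VV_def)
    also have "\<dots> \<le> VV s * exp (- \<delta> * (t - s))" by (rule Vts)
    also have "\<dots> \<le> Lam * ((u s)^2 + (u' s)^2) * exp (- \<delta> * (t - s))"
      using mult_right_mono[OF Vup[where x="u s" and y="u' s"] exp_ge_zero] by (simp add: VV_def)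
    finally have "lam * ((u t)^2 + (u' t)^2) \<le> Lam * ((u s)^2 + (u' s)^2) * exp (- \<delta> * (t - s))" .
    then show "(u t)\<^sup>2 + (u' t)\<^sup>2 \<le> Lam/lam * ((u s)\<^sup>2 + (u' s)\<^sup>2) * exp (- \<delta> * (t - s))"
      using lpos by (simp add: field_simps)
  qed
  qed
qed

end
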